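(* The action of the automorphism group $\mathrm{Aut}(M_7)$ on the moduli space $\mathcal{R}_7$ (equivalently, by birational maps on the quartic surface $Z_7$) is faithful.
   Context: Over $\mathbb{C}$. $M_7$ is the rank-3 matroid on $E=\{1,\dots,7,1',\dots,7'\}$ in which every 3-subset is a basis except the triples $\{a,b,c'\}$ with $a\neq b\in\{1,\dots,7\}$, $a+b\equiv 2c\pmod 7$. $\mathrm{Aut}(M_7)$ is the group of permutations of $E$ mapping bases to bases; identifying $i'$ with $7+i$, it is generated by $(1,7,4,3,6,5,2)(8,14,11,10,13,12,9)$ and $(1,3,5,6,7,2)(8,10,12,13,14,9)$ and is isomorphic to the Frobenius group of order 42. A realization of $M_7$ is a labeled family of 14 distinct lines $(m_e)_{e\in E}$ in $\mathbb{P}^2$ such that three are concurrent iff their labels form a non-basis; $\mathcal{R}_7$ is the moduli space (a surface) of $\mathrm{PGL}_3$-orbits of realizations. $\sigma\in\mathrm{Aut}(M_7)$ acts on realizations by permuting the labels of the lines, which induces an action on $\mathcal{R}_7$. $\mathcal{R}_7$ is a dense open subset of the quartic $Z_7\subset\mathbb{P}^3$: $y_1^2y_2^2+y_1^2y_2y_3-y_1y_2^2y_3-y_1y_2y_3^2-y_1^2y_2y_4-y_1y_2^2y_4+y_1y_2y_3y_4-y_2y_3^2y_4+y_1y_2y_4^2+y_3^2y_4^2=0$. *)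

theory Defs
  imports "HOL-Analysis.Analysis"
begin

text \<open>Ground set of M_7: labels 1..7 are the elements 1..7, labels 8..14 are 1'..7' (i' = 7+i).\<close>
definition E7 :: "nat set" where
  "E7 = {1..14}"

definition nonbasis7 :: "nat set \<Rightarrow> bool" where
  "nonbasis7 T \<longleftrightarrow> (\<exists>a b c. a \<in> {1..7} \<and> b \<in> {1..7} \<and> c \<in> {1..7} \<and> a \<noteq> b \<and>
       (a + b) mod 7 = (2 * c) mod 7 \<and> T = {a, b, 7 + c})"

definition basis7 :: "nat set \<Rightarrow> bool" where
  "basis7 B \<longleftrightarrow> B \<subseteq> E7 \<and> card B = 3 \<and> \<not> nonbasis7 B"

definition Aut7 :: "(nat \<Rightarrow> nat) set" where
  "Aut7 = {\<sigma>. bij_betw \<sigma> E7 E7 \<and> (\<forall>B. basis7 B \<longrightarrow> basis7 (\<sigma> ` B))}"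

text \<open>A line of P^2 over C is given by a nonzero coordinate vector in C^3 (up to scaling).\<close>
definition same_line :: "complex^3 \<Rightarrow> complex^3 \<Rightarrow> bool" where
  "same_line u v \<longleftrightarrow> (\<exists>c. c \<noteq> 0 \<and> u = c *s v)"

definition concurrent :: "complex^3 \<Rightarrow> complex^3 \<Rightarrow> complex^3 \<Rightarrow> bool" where
  "concurrent u v w \<longleftrightarrow> det (vector [u, v, w] :: complex^3^3) = 0"

definition realization7 :: "(nat \<Rightarrow> complex^3) \<Rightarrow> bool" where
  "realization7 m \<longleftrightarrow>
     (\<forall>e\<in>E7. m e \<noteq> 0) \<and>
     (\<forall>e\<in>E7. \<forall>f\<in>E7. e \<noteq> f \<longrightarrow> \<not> same_line (m e) (m f)) \<and>
     (\<forall>a\<in>E7. \<forall>b\<in>E7. \<forall>c\<in>E7. a \<noteq> b \<and> a \<noteq> c \<and> b \<noteq> c \<longrightarrow>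
         (concurrent (m a) (m b) (m c) \<longleftrightarrow> nonbasis7 {a, b, c}))"

definition pgl_equiv :: "(nat \<Rightarrow> complex^3) \<Rightarrow> (nat \<Rightarrow> complex^3) \<Rightarrow> bool" where
  "pgl_equiv m m' \<longleftrightarrow> (\<exists>A :: complex^3^3. invertible A \<and> (\<forall>e\<in>E7. same_line (A *v m e) (m' e)))"

definition relabel :: "(nat \<Rightarrow> nat) \<Rightarrow> (nat \<Rightarrow> complex^3) \<Rightarrow> (nat \<Rightarrow> complex^3)" where
  "relabel \<sigma> m = m \<circ> inv_into E7 \<sigma>"

end

theory Submission
  imports Defs
begin

definition mx :: "nat \<Rightarrow> int" where
  "mx e = (if e = 1 then 1 else (if e = 2 then 0 else (if e = 3 then 0 else (if e = 4 then 349 else (if e = 5 then -2008 else (if e = 6 then 2304 else (if e = 7 then -127 else (if e = 8 then -292608 else (if e = 9 then -71 else (if e = 10 then -237320 else (if e = 11 then -72288 else (if e = 12 then -127 else (if e = 13 then 0 else (if e = 14 then -87599 else 0))))))))))))))"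

lemma mx_simps [simp]:
  "mx 0 = 0"
  "mx 1 = 1"
  "mx 2 = 0"
  "mx 3 = 0"
  "mx 4 = 349"
  "mx 5 = -2008"
  "mx 6 = 2304"
  "mx 7 = -127"
  "mx 8 = -292608"
  "mx 9 = -71"
  "mx 10 = -237320"
  "mx 11 = -72288"
  "mx 12 = -127"
  "mx 13 = 0"
  "mx 14 = -87599"
  by (simp_all add: mx_def)

lemma mx_Suc0 [simp]: "mx (Suc 0) = 1"
  by (simp add: mx_def)

definition my :: "nat \<Rightarrow> int" where
  "my e = (if e = 1 then 0 else (if e = 2 then 1 else (if e = 3 then 0 else (if e = 4 then 595 else (if e = 5 then 2443 else (if e = 6 then 1757 else (if e = 7 then 252 else (if e = 8 then -223139 else (if e = 9 then 0 else (if e = 10 then 173453 else (if e = 11 then 87948 else (if e = 12 then 252 else (if e = 13 then 595 else (if e = 14 then -149345 else 0))))))))))))))"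

lemma my_simps [simp]:
  "my 0 = 0"
  "my 1 = 0"
  "my 2 = 1"
  "my 3 = 0"
  "my 4 = 595"
  "my 5 = 2443"
  "my 6 = 1757"
  "my 7 = 252"
  "my 8 = -223139"
  "my 9 = 0"
  "my 10 = 173453"
  "my 11 = 87948"
  "my 12 = 252"
  "my 13 = 595"
  "my 14 = -149345"
  by (simp_all add: my_def)

lemma my_Suc0 [simp]: "my (Suc 0) = 0"
  by (simp add: my_def)

definition mz :: "nat \<Rightarrow> int" where
  "mz e = (if e = 1 then 0 else (if e = 2 then 0 else (if e = 3 then 1 else (if e = 4 then -568 else (if e = 5 then 5440 else (if e = 6 then -2792 else (if e = 7 then 251 else (if e = 8 then 578304 else (if e = 9 then 127 else (if e = 10 then 386240 else (if e = 11 then 87599 else (if e = 12 then 0 else (if e = 13 then -568 else (if e = 14 then 237320 else 0))))))))))))))"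

lemma mz_simps [simp]:
  "mz 0 = 0"
  "mz 1 = 0"
  "mz 2 = 0"
  "mz 3 = 1"
  "mz 4 = -568"
  "mz 5 = 5440"
  "mz 6 = -2792"
  "mz 7 = 251"
  "mz 8 = 578304"
  "mz 9 = 127"
  "mz 10 = 386240"
  "mz 11 = 87599"
  "mz 12 = 0"
  "mz 13 = -568"
  "mz 14 = 237320"
  by (simp_all add: mz_def)

lemma mz_Suc0 [simp]: "mz (Suc 0) = 0"
  by (simp add: mz_def)

definition Dint :: "nat \<Rightarrow> nat \<Rightarrow> nat \<Rightarrow> int" where
  "Dint a b c = mx a * (my b * mz c - mz b * my c) - my a * (mx b * mz c - mz b * mx c)
      + mz a * (mx b * my c - my b * mx c)"

definition md7 :: "nat \<Rightarrow> nat" where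
  "md7 x = (if x mod 7 = 0 then 7 else x mod 7)"

definition third :: "nat \<Rightarrow> nat \<Rightarrow> nat" where
  "third p q = (if p \<le> 7 \<and> q \<le> 7 then (if p \<noteq> q then 7 + md7 (4 * (p + q)) else 0)
     else if p \<le> 7 \<and> 8 \<le> q then (if md7 (2 * (q - 7) + 7 - p) \<noteq> p then md7 (2 * (q - 7) + 7 - p) else 0)
     else if q \<le> 7 \<and> 8 \<le> p then (if md7 (2 * (p - 7) + 7 - q) \<noteq> q then md7 (2 * (p - 7) + 7 - q) else 0)
     else 0)"

lemma third_tab [simp]:
  "third (0) (0) = 0"
  "third (0) (Suc 0) = 11"
  "third (0) (2) = 8"
  "third (0) (3) = 12"
  "third (0) (4) = 9"
  "third (0) (5) = 13"
  "third (0) (6) = 10"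
  "third (0) (7) = 14"
  "third (0) (8) = 2"
  "third (0) (9) = 4"
  "third (0) (10) = 6"
  "third (0) (11) = Suc 0"
  "third (0) (12) = 3"
  "third (0) (13) = 5"
  "third (0) (14) = 7"
  "third (Suc 0) (0) = 11"
  "third (Suc 0) (Suc 0) = 0"
  "third (Suc 0) (2) = 12"
  "third (Suc 0) (3) = 9"
  "third (Suc 0) (4) = 13"
  "third (Suc 0) (5) = 10"
  "third (Suc 0) (6) = 14"
  "third (Suc 0) (7) = 11"
  "third (Suc 0) (8) = 0"
  "third (Suc 0) (9) = 3"
  "third (Suc 0) (10) = 5"
  "third (Suc 0) (11) = 7"
  "third (Suc 0) (12) = 2"
  "third (Suc 0) (13) = 4"
  "third (Suc 0) (14) = 6"
  "third (2) (0) = 8"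
  "third (2) (Suc 0) = 12"
  "third (2) (2) = 0"
  "third (2) (3) = 13"
  "third (2) (4) = 10"
  "third (2) (5) = 14"
  "third (2) (6) = 11"
  "third (2) (7) = 8"
  "third (2) (8) = 7"
  "third (2) (9) = 0"
  "third (2) (10) = 4"
  "third (2) (11) = 6"
  "third (2) (12) = Suc 0"
  "third (2) (13) = 3"
  "third (2) (14) = 5"
  "third (3) (0) = 12"
  "third (3) (Suc 0) = 9"
  "third (3) (2) = 13"
  "third (3) (3) = 0"
  "third (3) (4) = 14"
  "third (3) (5) = 11"
  "third (3) (6) = 8"
  "third (3) (7) = 12"
  "third (3) (8) = 6"
  "third (3) (9) = Suc 0"
  "third (3) (10) = 0"
  "third (3) (11) = 5"
  "third (3) (12) = 7"
  "third (3) (13) = 2"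
  "third (3) (14) = 4"
  "third (4) (0) = 9"
  "third (4) (Suc 0) = 13"
  "third (4) (2) = 10"
  "third (4) (3) = 14"
  "third (4) (4) = 0"
  "third (4) (5) = 8"
  "third (4) (6) = 12"
  "third (4) (7) = 9"
  "third (4) (8) = 5"
  "third (4) (9) = 7"
  "third (4) (10) = 2"
  "third (4) (11) = 0"
  "third (4) (12) = 6"
  "third (4) (13) = Suc 0"
  "third (4) (14) = 3"
  "third (5) (0) = 13"
  "third (5) (Suc 0) = 10"
  "third (5) (2) = 14"
  "third (5) (3) = 11"
  "third (5) (4) = 8"
  "third (5) (5) = 0"
  "third (5) (6) = 9"
  "third (5) (7) = 13"
  "third (5) (8) = 4"
  "third (5) (9) = 6"
  "third (5) (10) = Suc 0"
  "third (5) (11) = 3"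
  "third (5) (12) = 0"
  "third (5) (13) = 7"
  "third (5) (14) = 2"
  "third (6) (0) = 10"
  "third (6) (Suc 0) = 14"
  "third (6) (2) = 11"
  "third (6) (3) = 8"
  "third (6) (4) = 12"
  "third (6) (5) = 9"
  "third (6) (6) = 0"
  "third (6) (7) = 10"
  "third (6) (8) = 3"
  "third (6) (9) = 5"
  "third (6) (10) = 7"
  "third (6) (11) = 2"
  "third (6) (12) = 4"
  "third (6) (13) = 0"
  "third (6) (14) = Suc 0"
  "third (7) (0) = 14"
  "third (7) (Suc 0) = 11"
  "third (7) (2) = 8"
  "third (7) (3) = 12"
  "third (7) (4) = 9"
  "third (7) (5) = 13"
  "third (7) (6) = 10"
  "third (7) (7) = 0"
  "third (7) (8) = 2"
  "third (7) (9) = 4"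
  "third (7) (10) = 6"
  "third (7) (11) = Suc 0"
  "third (7) (12) = 3"
  "third (7) (13) = 5"
  "third (7) (14) = 0"
  "third (8) (0) = 2"
  "third (8) (Suc 0) = 0"
  "third (8) (2) = 7"
  "third (8) (3) = 6"
  "third (8) (4) = 5"
  "third (8) (5) = 4"
  "third (8) (6) = 3"
  "third (8) (7) = 2"
  "third (8) (8) = 0"
  "third (8) (9) = 0"
  "third (8) (10) = 0"
  "third (8) (11) = 0"
  "third (8) (12) = 0"
  "third (8) (13) = 0"
  "third (8) (14) = 0"
  "third (9) (0) = 4"
  "third (9) (Suc 0) = 3"
  "third (9) (2) = 0"
  "third (9) (3) = Suc 0"
  "third (9) (4) = 7"
  "third (9) (5) = 6"
  "third (9) (6) = 5"
  "third (9) (7) = 4"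
  "third (9) (8) = 0"
  "third (9) (9) = 0"
  "third (9) (10) = 0"
  "third (9) (11) = 0"
  "third (9) (12) = 0"
  "third (9) (13) = 0"
  "third (9) (14) = 0"
  "third (10) (0) = 6"
  "third (10) (Suc 0) = 5"
  "third (10) (2) = 4"
  "third (10) (3) = 0"
  "third (10) (4) = 2"
  "third (10) (5) = Suc 0"
  "third (10) (6) = 7"
  "third (10) (7) = 6"
  "third (10) (8) = 0"
  "third (10) (9) = 0"
  "third (10) (10) = 0"
  "third (10) (11) = 0"
  "third (10) (12) = 0"
  "third (10) (13) = 0"
  "third (10) (14) = 0"
  "third (11) (0) = Suc 0"
  "third (11) (Suc 0) = 7"
  "third (11) (2) = 6"
  "third (11) (3) = 5"
  "third (11) (4) = 0"
  "third (11) (5) = 3"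
  "third (11) (6) = 2"
  "third (11) (7) = Suc 0"
  "third (11) (8) = 0"
  "third (11) (9) = 0"
  "third (11) (10) = 0"
  "third (11) (11) = 0"
  "third (11) (12) = 0"
  "third (11) (13) = 0"
  "third (11) (14) = 0"
  "third (12) (0) = 3"
  "third (12) (Suc 0) = 2"
  "third (12) (2) = Suc 0"
  "third (12) (3) = 7"
  "third (12) (4) = 6"
  "third (12) (5) = 0"
  "third (12) (6) = 4"
  "third (12) (7) = 3"
  "third (12) (8) = 0"
  "third (12) (9) = 0"
  "third (12) (10) = 0"
  "third (12) (11) = 0"
  "third (12) (12) = 0"
  "third (12) (13) = 0"
  "third (12) (14) = 0"
  "third (13) (0) = 5"
  "third (13) (Suc 0) = 4"
  "third (13) (2) = 3"
  "third (13) (3) = 2"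
  "third (13) (4) = Suc 0"
  "third (13) (5) = 7"
  "third (13) (6) = 0"
  "third (13) (7) = 5"
  "third (13) (8) = 0"
  "third (13) (9) = 0"
  "third (13) (10) = 0"
  "third (13) (11) = 0"
  "third (13) (12) = 0"
  "third (13) (13) = 0"
  "third (13) (14) = 0"
  "third (14) (0) = 7"
  "third (14) (Suc 0) = 6"
  "third (14) (2) = 5"
  "third (14) (3) = 4"
  "third (14) (4) = 3"
  "third (14) (5) = 2"
  "third (14) (6) = Suc 0"
  "third (14) (7) = 0"
  "third (14) (8) = 0"
  "third (14) (9) = 0"
  "third (14) (10) = 0"
  "third (14) (11) = 0"
  "third (14) (12) = 0"
  "third (14) (13) = 0"
  "third (14) (14) = 0"
  by (simp_all add: third_def md7_def)

lemma E7_eq: "E7 = {1,2,3,4,5,6,7,8,9,10,11,12,13,14}"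
  unfolding E7_def by (rule set_eqI) (simp, presburger)

definition nb :: "nat \<Rightarrow> nat \<Rightarrow> nat \<Rightarrow> bool" where
  "nb a b x \<longleftrightarrow> a \<in> {1..7} \<and> b \<in> {1..7} \<and> x \<in> {8..14} \<and> a \<noteq> b \<and> (a + b) mod 7 = (2 * (x - 7)) mod 7"

definition NBsym :: "nat \<Rightarrow> nat \<Rightarrow> nat \<Rightarrow> bool" where
  "NBsym p q z \<longleftrightarrow> nb p q z \<or> nb q p z \<or> nb p z q \<or> nb z p q \<or> nb q z p \<or> nb z q p"

lemma nb_witness: "nb a b x \<Longrightarrow> nonbasis7 {a, b, x}"
  unfolding nb_def nonbasis7_def
  by (rule exI[of _ a], rule exI[of _ b], rule exI[of _ "x - 7"]) auto

lemma nonbasis_NBsym: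
  assumes "p \<noteq> q" "p \<noteq> z" "q \<noteq> z"
  shows "nonbasis7 {p, q, z} \<longleftrightarrow> NBsym p q z"
proof
  assume "NBsym p q z"
  then show "nonbasis7 {p, q, z}" unfolding NBsym_def
    by (auto dest!: nb_witness simp: insert_commute)
next
  assume "nonbasis7 {p, q, z}"
  then obtain a b c where abc: "a \<in> {1..7}" "b \<in> {1..7}" "c \<in> {1..7}" "a \<noteq> b"
    "(a + b) mod 7 = (2 * c) mod 7" and T: "{p, q, z} = {a, b, 7 + c}"
    unfolding nonbasis7_def by blast
  have nbab: "nb a b (7 + c)" "nb b a (7 + c)" using abc unfolding nb_def by (auto simp: add.commute)
  have "p \<in> {a, b, 7 + c}" "q \<in> {a, b, 7 + c}" "z \<in> {a, b, 7 + c}"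
    "a \<in> {p, q, z}" "b \<in> {p, q, z}" "7 + c \<in> {p, q, z}" using T by blast+
  then show "NBsym p q z" using nbab assms unfolding NBsym_def by auto
qed

definition G1p :: "nat \<Rightarrow> nat \<Rightarrow> nat \<Rightarrow> bool" where
  "G1p p q z \<longleftrightarrow> (Dint p q z = 0 \<longleftrightarrow> third p q = z)"

definition G2p :: "nat \<Rightarrow> nat \<Rightarrow> nat \<Rightarrow> bool" where
  "G2p p q z \<longleftrightarrow> (NBsym p q z \<longleftrightarrow> third p q = z)"

definition NSp :: "nat \<Rightarrow> nat \<Rightarrow> bool" where
  "NSp p q \<longleftrightarrow> (p \<noteq> q \<longrightarrow> \<not> (mx p * my q = my p * mx q \<and> mx p * mz q = mz p * mx q \<and> my p * mz q = mz p * my q))"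

definition NZp :: "nat \<Rightarrow> bool" where
  "NZp p \<longleftrightarrow> \<not> (mx p = 0 \<and> my p = 0 \<and> mz p = 0)"

definition ok2 :: "nat \<Rightarrow> nat \<Rightarrow> bool" where
  "ok2 v1 v2 \<longleftrightarrow> v1 \<noteq> v2 \<and> third v1 v2 \<noteq> 0"

definition ok3 :: "nat \<Rightarrow> nat \<Rightarrow> nat \<Rightarrow> bool" where
  "ok3 v1 v2 v3 \<longleftrightarrow> third v1 v3 \<noteq> 0 \<and> third v2 v3 \<noteq> 0 \<and> third v1 (third v2 v3) \<noteq> 0 \<and>
     distinct [v1, v2, v3, third v1 v2, third v1 v3, third v2 v3, third v1 (third v2 v3)]"

definition srchE :: "nat \<Rightarrow> nat \<Rightarrow> nat \<Rightarrow> nat \<Rightarrow> nat \<Rightarrow> nat \<Rightarrow> nat \<Rightarrow> bool" where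
  "srchE v1 v2 v3 t12 t13 t23 t4 \<longleftrightarrow>
     (Dint 12 1 9 * Dint 12 3 13 * Dint t12 v1 t23 * Dint t12 v3 t13 =
         Dint t12 v1 t13 * Dint t12 v3 t23 * Dint 12 1 13 * Dint 12 3 9 \<and>
       Dint 2 1 4 * Dint 2 3 9 * Dint v2 v1 t13 * Dint v2 v3 t4 =
         Dint v2 v1 t4 * Dint v2 v3 t13 * Dint 2 1 9 * Dint 2 3 4
      \<longrightarrow> v1 = 1 \<and> v2 = 2 \<and> v3 = 3)"

definition srch :: "nat \<Rightarrow> nat \<Rightarrow> nat \<Rightarrow> bool" where
  "srch v1 v2 v3 \<longleftrightarrow> srchE v1 v2 v3 (third v1 v2) (third v1 v3) (third v2 v3) (third v1 (third v2 v3))"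

lemma ballE7I:
  assumes "P 1" "P 2" "P 3" "P 4" "P 5" "P 6" "P 7" "P 8" "P 9" "P 10" "P 11" "P 12" "P 13" "P 14"
  shows "\<forall>p\<in>E7. P p"
  using assms by (simp add: E7_eq)

lemma sym3:
  fixes P :: "nat \<Rightarrow> nat \<Rightarrow> nat \<Rightarrow> bool"
  assumes s1: "\<And>p q z. P p q z \<Longrightarrow> P q p z" and s2: "\<And>p q z. P p q z \<Longrightarrow> P p z q"
    and b: "\<And>p q z. p < q \<Longrightarrow> q < z \<Longrightarrow> P p q z"
    and d: "p \<noteq> q" "p \<noteq> z" "q \<noteq> z"
  shows "P p q z"
proof (cases "p < q")
  case True
  show ?thesis
  proof (cases "q < z")
    case True
    then show ?thesis using b \<open>p < q\<close> by blast
  next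
    case False
    then have "z < q" using d by simp
    show ?thesis
    proof (cases "p < z")
      case True
      then show ?thesis using b[of p z q] \<open>z < q\<close> s2 by blast
    next
      case False
      then have "z < p" using d by simp
      then show ?thesis using b[of z p q] \<open>p < q\<close> s1 s2 by blast
    qed
  qed
next
  case False
  then have "q < p" using d by simp
  show ?thesis
  proof (cases "p < z")
    case True
    then show ?thesis using b[of q p z] \<open>q < p\<close> s1 by blast
  next
    case False
    then have "z < p" using d by simp
    show ?thesis
    proof (cases "q < z")
      case True
      then show ?thesis using b[of q z p] \<open>z < p\<close> s1 s2 by blast
    next
      case False
      then have "z < q" using d by simp
      then show ?thesis using b[of z q p] \<open>q < p\<close> s1 s2 by blast
    qed
  qed
qed

lemma third_sym_all: "\<forall>p\<in>E7. \<forall>q\<in>E7. third p q = third q p"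
  by (intro ballE7I) simp_all

lemma third_inv_all: "\<forall>p\<in>E7. \<forall>q\<in>E7. third p q \<noteq> 0 \<longrightarrow> third p (third p q) = q"
  by (intro ballE7I) simp_all

lemma third_swap:
  assumes "p \<in> E7" "q \<in> E7" "z \<in> E7" "0 \<notin> E7"
  shows "third p q = z \<longleftrightarrow> third p z = q"
proof
  assume h: "third p q = z"
  have "z \<noteq> 0" using assms(3,4) by metis
  then have "third p q \<noteq> 0" using h by simp
  then have "third p (third p q) = q" using third_inv_all assms by blast
  then show "third p z = q" using h by simp
next
  assume h: "third p z = q"
  have "q \<noteq> 0" using assms(2,4) by metis
  then have "third p z \<noteq> 0" using h by simp
  then have "third p (third p z) = z" using third_inv_all assms by blast
  then show "third p q = z" using h by simp
qed

lemma zE7: "0 \<notin> E7" by (simp add: E7_def)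

lemma Dint_swap1: "Dint q p z = - Dint p q z" by (simp add: Dint_def algebra_simps)
lemma Dint_swap2: "Dint p z q = - Dint p q z" by (simp add: Dint_def algebra_simps)

lemma NBsym_swap1: "NBsym q p z = NBsym p q z" unfolding NBsym_def by blast
lemma NBsym_swap2: "NBsym p z q = NBsym p q z" unfolding NBsym_def by blast

lemma G1_sorted: "\<forall>p\<in>E7. \<forall>q\<in>E7. \<forall>z\<in>E7. p < q \<longrightarrow> q < z \<longrightarrow> G1p p q z"
  apply (intro ballE7I)
  apply simp_all
  apply (simp_all add: G1p_def Dint_def)
  done

lemma G2_sorted: "\<forall>p\<in>E7. \<forall>q\<in>E7. \<forall>z\<in>E7. p < q \<longrightarrow> q < z \<longrightarrow> G2p p q z"
  apply (intro ballE7I)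
  apply simp_all
  apply (simp_all add: G2p_def NBsym_def nb_def)
  done

lemma G1_gen:
  assumes "p \<in> E7" "q \<in> E7" "z \<in> E7" "p \<noteq> q" "p \<noteq> z" "q \<noteq> z"
  shows "Dint p q z = 0 \<longleftrightarrow> third p q = z"
proof -
  let ?P = "\<lambda>p q z. p \<in> E7 \<longrightarrow> q \<in> E7 \<longrightarrow> z \<in> E7 \<longrightarrow> (Dint p q z = 0 \<longleftrightarrow> third p q = z)"
  have "?P p q z"
  proof (rule sym3[where P = ?P])
    fix p q z :: nat assume h: "?P p q z"
    show "?P q p z"
      using h third_sym_all Dint_swap1[of q p z] by auto
  next
    fix p q z :: nat assume h: "?P p q z"
    show "?P p z q"
      using h third_swap[OF _ _ _ zE7, of p q z] Dint_swap2[of p z q] by auto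
  next
    fix p q z :: nat assume "p < q" "q < z"
    then show "?P p q z" using G1_sorted unfolding G1p_def by blast
  qed (use assms in auto)
  then show ?thesis using assms by blast
qed

lemma G2_gen:
  assumes "p \<in> E7" "q \<in> E7" "z \<in> E7" "p \<noteq> q" "p \<noteq> z" "q \<noteq> z"
  shows "NBsym p q z \<longleftrightarrow> third p q = z"
proof -
  let ?P = "\<lambda>p q z. p \<in> E7 \<longrightarrow> q \<in> E7 \<longrightarrow> z \<in> E7 \<longrightarrow> (NBsym p q z \<longleftrightarrow> third p q = z)"
  have "?P p q z"
  proof (rule sym3[where P = ?P])
    fix p q z :: nat assume h: "?P p q z"
    show "?P q p z"
      using h third_sym_all NBsym_swap1[of q p z] by auto
  next
    fix p q z :: nat assume h: "?P p q z"
    show "?P p z q"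
      using h third_swap[OF _ _ _ zE7, of p q z] NBsym_swap2[of p z q] by auto
  next
    fix p q z :: nat assume "p < q" "q < z"
    then show "?P p q z" using G2_sorted unfolding G2p_def by blast
  qed (use assms in auto)
  then show ?thesis using assms by blast
qed

lemma NS_all: "\<forall>p\<in>E7. \<forall>q\<in>E7. NSp p q"
  by (intro ballE7I) (simp_all add: NSp_def)

lemma NZ_all: "\<forall>p\<in>E7. NZp p"
  by (intro ballE7I) (simp_all add: NZp_def)

lemma search_1: "\<forall>v2\<in>E7. \<forall>v3\<in>E7. ok2 1 v2 \<longrightarrow> ok3 1 v2 v3 \<longrightarrow> srch 1 v2 v3"
  apply (intro ballE7I)
  apply ((simp_all add: ok2_def)?)
  apply ((simp_all add: ok3_def)?)
  apply ((simp_all add: srch_def srchE_def Dint_def)?)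
  done

lemma search_2: "\<forall>v2\<in>E7. \<forall>v3\<in>E7. ok2 2 v2 \<longrightarrow> ok3 2 v2 v3 \<longrightarrow> srch 2 v2 v3"
  apply (intro ballE7I)
  apply ((simp_all add: ok2_def)?)
  apply ((simp_all add: ok3_def)?)
  apply ((simp_all add: srch_def srchE_def Dint_def)?)
  done

lemma search_3: "\<forall>v2\<in>E7. \<forall>v3\<in>E7. ok2 3 v2 \<longrightarrow> ok3 3 v2 v3 \<longrightarrow> srch 3 v2 v3"
  apply (intro ballE7I)
  apply ((simp_all add: ok2_def)?)
  apply ((simp_all add: ok3_def)?)
  apply ((simp_all add: srch_def srchE_def Dint_def)?)
  done

lemma search_4: "\<forall>v2\<in>E7. \<forall>v3\<in>E7. ok2 4 v2 \<longrightarrow> ok3 4 v2 v3 \<longrightarrow> srch 4 v2 v3"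
  apply (intro ballE7I)
  apply ((simp_all add: ok2_def)?)
  apply ((simp_all add: ok3_def)?)
  apply ((simp_all add: srch_def srchE_def Dint_def)?)
  done

lemma search_5: "\<forall>v2\<in>E7. \<forall>v3\<in>E7. ok2 5 v2 \<longrightarrow> ok3 5 v2 v3 \<longrightarrow> srch 5 v2 v3"
  apply (intro ballE7I)
  apply ((simp_all add: ok2_def)?)
  apply ((simp_all add: ok3_def)?)
  apply ((simp_all add: srch_def srchE_def Dint_def)?)
  done

lemma search_6: "\<forall>v2\<in>E7. \<forall>v3\<in>E7. ok2 6 v2 \<longrightarrow> ok3 6 v2 v3 \<longrightarrow> srch 6 v2 v3"
  apply (intro ballE7I)
  apply ((simp_all add: ok2_def)?)
  apply ((simp_all add: ok3_def)?)
  apply ((simp_all add: srch_def srchE_def Dint_def)?)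
  done

lemma search_7: "\<forall>v2\<in>E7. \<forall>v3\<in>E7. ok2 7 v2 \<longrightarrow> ok3 7 v2 v3 \<longrightarrow> srch 7 v2 v3"
  apply (intro ballE7I)
  apply ((simp_all add: ok2_def)?)
  apply ((simp_all add: ok3_def)?)
  apply ((simp_all add: srch_def srchE_def Dint_def)?)
  done

lemma search_8: "\<forall>v2\<in>E7. \<forall>v3\<in>E7. ok2 8 v2 \<longrightarrow> ok3 8 v2 v3 \<longrightarrow> srch 8 v2 v3"
  apply (intro ballE7I)
  apply ((simp_all add: ok2_def)?)
  apply ((simp_all add: ok3_def)?)
  apply ((simp_all add: srch_def srchE_def Dint_def)?)
  done

lemma search_9: "\<forall>v2\<in>E7. \<forall>v3\<in>E7. ok2 9 v2 \<longrightarrow> ok3 9 v2 v3 \<longrightarrow> srch 9 v2 v3"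
  apply (intro ballE7I)
  apply ((simp_all add: ok2_def)?)
  apply ((simp_all add: ok3_def)?)
  apply ((simp_all add: srch_def srchE_def Dint_def)?)
  done

lemma search_10: "\<forall>v2\<in>E7. \<forall>v3\<in>E7. ok2 10 v2 \<longrightarrow> ok3 10 v2 v3 \<longrightarrow> srch 10 v2 v3"
  apply (intro ballE7I)
  apply ((simp_all add: ok2_def)?)
  apply ((simp_all add: ok3_def)?)
  apply ((simp_all add: srch_def srchE_def Dint_def)?)
  done

lemma search_11: "\<forall>v2\<in>E7. \<forall>v3\<in>E7. ok2 11 v2 \<longrightarrow> ok3 11 v2 v3 \<longrightarrow> srch 11 v2 v3"
  apply (intro ballE7I)
  apply ((simp_all add: ok2_def)?)
  apply ((simp_all add: ok3_def)?)
  apply ((simp_all add: srch_def srchE_def Dint_def)?)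
  done

lemma search_12: "\<forall>v2\<in>E7. \<forall>v3\<in>E7. ok2 12 v2 \<longrightarrow> ok3 12 v2 v3 \<longrightarrow> srch 12 v2 v3"
  apply (intro ballE7I)
  apply ((simp_all add: ok2_def)?)
  apply ((simp_all add: ok3_def)?)
  apply ((simp_all add: srch_def srchE_def Dint_def)?)
  done

lemma search_13: "\<forall>v2\<in>E7. \<forall>v3\<in>E7. ok2 13 v2 \<longrightarrow> ok3 13 v2 v3 \<longrightarrow> srch 13 v2 v3"
  apply (intro ballE7I)
  apply ((simp_all add: ok2_def)?)
  apply ((simp_all add: ok3_def)?)
  apply ((simp_all add: srch_def srchE_def Dint_def)?)
  done

lemma search_14: "\<forall>v2\<in>E7. \<forall>v3\<in>E7. ok2 14 v2 \<longrightarrow> ok3 14 v2 v3 \<longrightarrow> srch 14 v2 v3"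
  apply (intro ballE7I)
  apply ((simp_all add: ok2_def)?)
  apply ((simp_all add: ok3_def)?)
  apply ((simp_all add: srch_def srchE_def Dint_def)?)
  done

lemma search_all: "\<forall>v1\<in>E7. \<forall>v2\<in>E7. \<forall>v3\<in>E7. ok2 v1 v2 \<longrightarrow> ok3 v1 v2 v3 \<longrightarrow> srch v1 v2 v3"
  by (rule ballE7I[OF search_1 search_2 search_3 search_4 search_5 search_6 search_7 search_8 search_9 search_10 search_11 search_12 search_13 search_14])

definition m0 :: "nat \<Rightarrow> complex^3" where
  "m0 e = vector [of_int (mx e), of_int (my e), of_int (mz e)]"

lemma m0_comp [simp]:
  "m0 e $ 1 = of_int (mx e)" "m0 e $ 2 = of_int (my e)" "m0 e $ 3 = of_int (mz e)"
  by (simp_all add: m0_def)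

lemma det_m0: "det (vector [m0 a, m0 b, m0 c] :: complex^3^3) = of_int (Dint a b c)"
  by (simp add: det_3 Dint_def algebra_simps)

lemma det_mulv:
  fixes A :: "complex^3^3"
  shows "det (vector [A *v u, A *v v, A *v w] :: complex^3^3) = det A * det (vector [u, v, w] :: complex^3^3)"
  by (simp add: det_3 matrix_vector_mult_def sum_3 algebra_simps)

lemma det_scal:
  shows "det (vector [a *s u, b *s v, c *s w] :: complex^3^3) = a * b * c * det (vector [u, v, w] :: complex^3^3)"
  by (simp add: det_3 algebra_simps)

lemma same_line_m0:
  assumes "same_line (m0 e) (m0 f)"
  shows "mx e * my f = my e * mx f \<and> mx e * mz f = mz e * mx f \<and> my e * mz f = mz e * my f"
proof -
  obtain c where c: "m0 e = c *s m0 f" using assms unfolding same_line_def by blast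
  have h1: "(of_int (mx e) :: complex) = c * of_int (mx f)"
    using arg_cong[OF c, of "\<lambda>v. v $ 1"] by simp
  have h2: "(of_int (my e) :: complex) = c * of_int (my f)"
    using arg_cong[OF c, of "\<lambda>v. v $ 2"] by simp
  have h3: "(of_int (mz e) :: complex) = c * of_int (mz f)"
    using arg_cong[OF c, of "\<lambda>v. v $ 3"] by simp
  have "(of_int (mx e * my f) :: complex) = of_int (my e * mx f)"
    by (simp add: h1 h2)
  moreover have "(of_int (mx e * mz f) :: complex) = of_int (mz e * mx f)"
    by (simp add: h1 h3)
  moreover have "(of_int (my e * mz f) :: complex) = of_int (mz e * my f)"
    by (simp add: h2 h3)
  ultimately show ?thesis by (simp only: of_int_eq_iff)
qed

lemma real_m0: "realization7 m0"
  unfolding realization7_def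
proof (intro conjI ballI impI allI)
  fix e assume e: "e \<in> E7"
  show "m0 e \<noteq> 0"
  proof
    assume "m0 e = 0"
    then have "m0 e $ 1 = 0" "m0 e $ 2 = 0" "m0 e $ 3 = 0" by simp_all
    then have "mx e = 0" "my e = 0" "mz e = 0" by simp_all
    then show False using NZ_all e unfolding NZp_def by blast
  qed
next
  fix e f assume e: "e \<in> E7" and f: "f \<in> E7" and ef: "e \<noteq> f"
  show "\<not> same_line (m0 e) (m0 f)"
    using same_line_m0[of e f] NS_all e f ef unfolding NSp_def by blast
next
  fix a b c assume a: "a \<in> E7" and b: "b \<in> E7" and c: "c \<in> E7"
  assume d: "a \<noteq> b \<and> a \<noteq> c \<and> b \<noteq> c"
  have "concurrent (m0 a) (m0 b) (m0 c) \<longleftrightarrow> Dint a b c = 0"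
    unfolding concurrent_def det_m0 by simp
  also have "\<dots> \<longleftrightarrow> third a b = c" using G1_gen a b c d by blast
  also have "\<dots> \<longleftrightarrow> NBsym a b c" using G2_gen a b c d by blast
  also have "\<dots> \<longleftrightarrow> nonbasis7 {a, b, c}" using nonbasis_NBsym d by blast
  finally show "concurrent (m0 a) (m0 b) (m0 c) \<longleftrightarrow> nonbasis7 {a, b, c}" .
qed

lemma cr_alg:
  fixes l ka k1 k2 k3 k4 x1 x2 x3 x4 y1 y2 y3 y4 :: complex
  assumes "l \<noteq> 0" "l * x1 = ka * k1 * k3 * y1" "l * x2 = ka * k2 * k4 * y2"
    "l * x3 = ka * k1 * k4 * y3" "l * x4 = ka * k2 * k3 * y4"
  shows "x1 * x2 * y3 * y4 = y1 * y2 * x3 * x4"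
proof -
  have "(l * l) * (x1 * x2 * y3 * y4) = (l * x1) * (l * x2) * y3 * y4" by (simp add: algebra_simps)
  also have "\<dots> = (ka * k1 * k3 * y1) * (ka * k2 * k4 * y2) * y3 * y4" using assms by simp
  also have "\<dots> = y1 * y2 * (ka * k1 * k4 * y3) * (ka * k2 * k3 * y4)" by (simp add: algebra_simps)
  also have "\<dots> = y1 * y2 * (l * x3) * (l * x4)" using assms by simp
  also have "\<dots> = (l * l) * (y1 * y2 * x3 * x4)" by (simp add: algebra_simps)
  finally show ?thesis using assms(1) by simp
qed

lemma mv_comp:
  fixes A :: "complex^3^3"
  shows "(A *v x) $ i = A $ i $ 1 * x $ 1 + A $ i $ 2 * x $ 2 + A $ i $ 3 * x $ 3"
  by (simp add: matrix_vector_mult_def sum_3)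

theorem proposition3p4:
  assumes "\<sigma> \<in> Aut7"
    and "\<forall>m. realization7 m \<longrightarrow> pgl_equiv (relabel \<sigma> m) m"
  shows "\<forall>e\<in>E7. \<sigma> e = e"
proof -
  have bij: "bij_betw \<sigma> E7 E7" using assms(1) unfolding Aut7_def by blast
  have inE: "\<And>e. e \<in> E7 \<Longrightarrow> \<sigma> e \<in> E7" using bij bij_betwE by blast
  have inj: "inj_on \<sigma> E7" using bij bij_betw_def by blast
  have injD: "\<sigma> a \<noteq> \<sigma> b" if "a \<in> E7" "b \<in> E7" "a \<noteq> b" for a b
    using inj that unfolding inj_on_def by blast
  have zE: "0 \<notin> E7" by (simp add: E7_def)
  have "pgl_equiv (relabel \<sigma> m0) m0" using assms(2) real_m0 by blast
  then obtain A :: "complex^3^3" where A: "invertible A"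
    and hA: "\<forall>e\<in>E7. same_line (A *v relabel \<sigma> m0 e) (m0 e)"
    unfolding pgl_equiv_def by blast
  have "\<forall>f\<in>E7. \<exists>c. c \<noteq> 0 \<and> A *v m0 f = c *s m0 (\<sigma> f)"
  proof
    fix f assume f: "f \<in> E7"
    have "same_line (A *v relabel \<sigma> m0 (\<sigma> f)) (m0 (\<sigma> f))" using hA inE f by blast
    moreover have "relabel \<sigma> m0 (\<sigma> f) = m0 f"
      unfolding relabel_def using inv_into_f_f[OF inj f] by simp
    ultimately show "\<exists>c. c \<noteq> 0 \<and> A *v m0 f = c *s m0 (\<sigma> f)" unfolding same_line_def by simp
  qed
  from bchoice[OF this] obtain k where k: "\<forall>f\<in>E7. k f \<noteq> 0 \<and> A *v m0 f = k f *s m0 (\<sigma> f)"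
    by blast
  have kne: "\<And>f. f \<in> E7 \<Longrightarrow> k f \<noteq> 0" using k by blast
  have kA: "\<And>f. f \<in> E7 \<Longrightarrow> A *v m0 f = k f *s m0 (\<sigma> f)" using k by blast
  have detA: "det A \<noteq> 0" using A invertible_det_nz by blast
  have R: "det A * of_int (Dint a b c) = k a * k b * k c * of_int (Dint (\<sigma> a) (\<sigma> b) (\<sigma> c))"
    if "a \<in> E7" "b \<in> E7" "c \<in> E7" for a b c
  proof -
    have "det A * of_int (Dint a b c) = det (vector [A *v m0 a, A *v m0 b, A *v m0 c] :: complex^3^3)"
      by (simp add: det_mulv det_m0)
    also have "\<dots> = det (vector [k a *s m0 (\<sigma> a), k b *s m0 (\<sigma> b), k c *s m0 (\<sigma> c)] :: complex^3^3)"
      using kA that by simp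
    also have "\<dots> = k a * k b * k c * of_int (Dint (\<sigma> a) (\<sigma> b) (\<sigma> c))"
      by (simp add: det_scal det_m0)
    finally show ?thesis .
  qed
  have Z: "Dint a b c = 0 \<longleftrightarrow> Dint (\<sigma> a) (\<sigma> b) (\<sigma> c) = 0"
    if "a \<in> E7" "b \<in> E7" "c \<in> E7" for a b c
  proof -
    have kk: "k a * k b * k c \<noteq> 0" using kne that by simp
    have "Dint a b c = 0 \<longleftrightarrow> det A * of_int (Dint a b c) = (0::complex)" using detA by simp
    also have "\<dots> \<longleftrightarrow> k a * k b * k c * of_int (Dint (\<sigma> a) (\<sigma> b) (\<sigma> c)) = 0"
      using R[OF that] by simp
    also have "\<dots> \<longleftrightarrow> Dint (\<sigma> a) (\<sigma> b) (\<sigma> c) = 0" using kk by simp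
    finally show ?thesis .
  qed
  have TH: "\<sigma> c = third (\<sigma> a) (\<sigma> b)"
    if "a \<in> E7" "b \<in> E7" "c \<in> E7" "a \<noteq> b" "a \<noteq> c" "b \<noteq> c" "Dint a b c = 0" for a b c
  proof -
    have d0: "Dint (\<sigma> a) (\<sigma> b) (\<sigma> c) = 0" using Z that by blast
    have dd: "\<sigma> a \<noteq> \<sigma> b" "\<sigma> a \<noteq> \<sigma> c" "\<sigma> b \<noteq> \<sigma> c" using injD that by auto
    have "Dint (\<sigma> a) (\<sigma> b) (\<sigma> c) = 0 \<longleftrightarrow> third (\<sigma> a) (\<sigma> b) = \<sigma> c"
      using G1_gen inE that dd by blast
    then show ?thesis using d0 by simp
  qed
  have CR: "Dint a b1 b3 * Dint a b2 b4 * Dint (\<sigma> a) (\<sigma> b1) (\<sigma> b4) * Dint (\<sigma> a) (\<sigma> b2) (\<sigma> b3) =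
            Dint (\<sigma> a) (\<sigma> b1) (\<sigma> b3) * Dint (\<sigma> a) (\<sigma> b2) (\<sigma> b4) * Dint a b1 b4 * Dint a b2 b3"
    if "a \<in> E7" "b1 \<in> E7" "b2 \<in> E7" "b3 \<in> E7" "b4 \<in> E7" for a b1 b2 b3 b4
  proof -
    have "(of_int (Dint a b1 b3) :: complex) * of_int (Dint a b2 b4) * of_int (Dint (\<sigma> a) (\<sigma> b1) (\<sigma> b4)) * of_int (Dint (\<sigma> a) (\<sigma> b2) (\<sigma> b3)) =
          of_int (Dint (\<sigma> a) (\<sigma> b1) (\<sigma> b3)) * of_int (Dint (\<sigma> a) (\<sigma> b2) (\<sigma> b4)) * of_int (Dint a b1 b4) * of_int (Dint a b2 b3)"
      by (rule cr_alg[OF detA R[OF that(1,2,4)] R[OF that(1,3,5)] R[OF that(1,2,5)] R[OF that(1,3,4)]])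
    then have "(of_int (Dint a b1 b3 * Dint a b2 b4 * Dint (\<sigma> a) (\<sigma> b1) (\<sigma> b4) * Dint (\<sigma> a) (\<sigma> b2) (\<sigma> b3)) :: complex) =
          of_int (Dint (\<sigma> a) (\<sigma> b1) (\<sigma> b3) * Dint (\<sigma> a) (\<sigma> b2) (\<sigma> b4) * Dint a b1 b4 * Dint a b2 b3)"
      by (simp only: of_int_mult)
    then show ?thesis by (simp only: of_int_eq_iff)
  qed
  have E: "1 \<in> E7" "2 \<in> E7" "3 \<in> E7" "4 \<in> E7" "9 \<in> E7" "12 \<in> E7" "13 \<in> E7"
    by (simp_all add: E7_def)
  have s12: "\<sigma> 12 = third (\<sigma> 1) (\<sigma> 2)" by (rule TH) (simp_all add: E7_def Dint_def)
  have s9: "\<sigma> 9 = third (\<sigma> 1) (\<sigma> 3)" by (rule TH) (simp_all add: E7_def Dint_def)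
  have s13: "\<sigma> 13 = third (\<sigma> 2) (\<sigma> 3)" by (rule TH) (simp_all add: E7_def Dint_def)
  have s4: "\<sigma> 4 = third (\<sigma> 1) (\<sigma> 13)" by (rule TH) (simp_all add: E7_def Dint_def)
  have dist: "distinct (map \<sigma> [1, 2, 3, 12, 9, 13, 4])"
  proof -
    have "inj_on \<sigma> (set [1, 2, 3, 12, 9, 13, 4])" by (rule inj_on_subset[OF inj]) (simp add: E7_def)
    then show ?thesis by (simp add: distinct_map)
  qed
  have n12: "\<sigma> 12 \<noteq> 0" using inE[OF E(6)] zE by metis
  have ok2: "ok2 (\<sigma> 1) (\<sigma> 2)"
    unfolding ok2_def using injD[of 1 2] E s12 n12 by simp
  have n9: "\<sigma> 9 \<noteq> 0" using inE[OF E(5)] zE by metis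
  have n13: "\<sigma> 13 \<noteq> 0" using inE[OF E(7)] zE by metis
  have n4: "\<sigma> 4 \<noteq> 0" using inE[OF E(4)] zE by metis
  have ok3: "ok3 (\<sigma> 1) (\<sigma> 2) (\<sigma> 3)"
    unfolding ok3_def s12[symmetric] s9[symmetric] s13[symmetric] s4[symmetric]
    using dist n9 n13 n4 by simp
  have "srch (\<sigma> 1) (\<sigma> 2) (\<sigma> 3)" using search_all inE E ok2 ok3 by blast
  then have sr: "srchE (\<sigma> 1) (\<sigma> 2) (\<sigma> 3) (\<sigma> 12) (\<sigma> 9) (\<sigma> 13) (\<sigma> 4)"
    unfolding srch_def s12[symmetric] s9[symmetric] s13[symmetric] s4[symmetric] .
  have c1: "Dint 12 1 9 * Dint 12 3 13 * Dint (\<sigma> 12) (\<sigma> 1) (\<sigma> 13) * Dint (\<sigma> 12) (\<sigma> 3) (\<sigma> 9) =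
            Dint (\<sigma> 12) (\<sigma> 1) (\<sigma> 9) * Dint (\<sigma> 12) (\<sigma> 3) (\<sigma> 13) * Dint 12 1 13 * Dint 12 3 9"
    using CR[of 12 1 3 9 13] E by blast
  have c2: "Dint 2 1 4 * Dint 2 3 9 * Dint (\<sigma> 2) (\<sigma> 1) (\<sigma> 9) * Dint (\<sigma> 2) (\<sigma> 3) (\<sigma> 4) =
            Dint (\<sigma> 2) (\<sigma> 1) (\<sigma> 4) * Dint (\<sigma> 2) (\<sigma> 3) (\<sigma> 9) * Dint 2 1 9 * Dint 2 3 4"
    using CR[of 2 1 3 4 9] E by blast
  have f123: "\<sigma> 1 = 1 \<and> \<sigma> 2 = 2 \<and> \<sigma> 3 = 3" using sr c1 c2 unfolding srchE_def by blast
  then have f1: "\<sigma> 1 = 1" and f2: "\<sigma> 2 = 2" and f3: "\<sigma> 3 = 3" by auto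
  have f12: "\<sigma> 12 = 12" using s12 f1 f2 by (simp add: third_def md7_def)
  have f9: "\<sigma> 9 = 9" using s9 f1 f3 by (simp add: third_def md7_def)
  have A1: "A *v m0 1 = k 1 *s m0 1" using kA[of 1] E f1 by simp
  have A2: "A *v m0 2 = k 2 *s m0 2" using kA[of 2] E f2 by simp
  have A3: "A *v m0 3 = k 3 *s m0 3" using kA[of 3] E f3 by simp
  have A12: "A *v m0 12 = k 12 *s m0 12" using kA[of 12] E f12 by simp
  have A9: "A *v m0 9 = k 9 *s m0 9" using kA[of 9] E f9 by simp
  have cmp: "\<And>x y i. x = y \<Longrightarrow> x $ i = y $ i" by simp
  have e1: "A$1$1 = k 1" "A$2$1 = 0" "A$3$1 = 0"
    using cmp[OF A1, of 1] cmp[OF A1, of 2] cmp[OF A1, of 3] by (simp_all add: mv_comp)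
  have e2: "A$1$2 = 0" "A$2$2 = k 2" "A$3$2 = 0"
    using cmp[OF A2, of 1] cmp[OF A2, of 2] cmp[OF A2, of 3] by (simp_all add: mv_comp)
  have e3: "A$1$3 = 0" "A$2$3 = 0" "A$3$3 = k 3"
    using cmp[OF A3, of 1] cmp[OF A3, of 2] cmp[OF A3, of 3] by (simp_all add: mv_comp)
  have k112: "k 1 = k 12" using cmp[OF A12, of 1] e1 e2 e3 by (simp add: mv_comp)
  have k212: "k 2 = k 12" using cmp[OF A12, of 2] e1 e2 e3 by (simp add: mv_comp)
  have k19: "k 1 = k 9" using cmp[OF A9, of 1] e1 e2 e3 by (simp add: mv_comp)
  have k39: "k 3 = k 9" using cmp[OF A9, of 3] e1 e2 e3 by (simp add: mv_comp)
  have k2: "k 2 = k 1" using k112 k212 by simp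
  have k3: "k 3 = k 1" using k19 k39 by simp
  have Asc: "A *v x = k 1 *s x" for x
    unfolding vec_eq_iff forall_3 mv_comp using e1 e2 e3 k2 k3 by simp
  show ?thesis
  proof
    fix e assume e: "e \<in> E7"
    have h: "k 1 *s m0 e = k e *s m0 (\<sigma> e)" using kA[OF e] Asc by simp
    have eq: "k 1 * m0 e $ i = k e * m0 (\<sigma> e) $ i" for i
      using cmp[OF h, of i] by simp
    have "m0 (\<sigma> e) = (k 1 / k e) *s m0 e"
      unfolding vec_eq_iff using eq kne[OF e] by (simp add: field_simps)
    moreover have "k 1 / k e \<noteq> 0" using kne[OF e] kne[OF E(1)] by simp
    ultimately have "same_line (m0 (\<sigma> e)) (m0 e)" unfolding same_line_def by blast
    then show "\<sigma> e = e" using real_m0 inE[OF e] e unfolding realization7_def by blast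
  qed
qed

end
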